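(* For $\beta,k,m\in\mathbb{N}$ and $\operatorname{Re}(s)>1$, $$\sum_{n=1}^\infty\frac{\Lambda^{(\beta)}_{k,m}(n)}{n^s}=(-1)^k\sigma^{(\beta)}_{1-s/\beta}(m)\frac{\zeta^{(k)}(s)}{\zeta(s)},$$ the series converging absolutely, where $\zeta^{(k)}$ is the $k$-th derivative of the Riemann zeta-function.
   Context: For $\beta,q,m\in\mathbb{N}$, $c_q^{(\beta)}(m)=\sum e^{2\pi i mh/q^\beta}$, the sum over integers $0\le h<q^\beta$ such that $h$ and $q^\beta$ have no common divisor of the form $d^\beta$ with $d>1$. For $z\in\mathbb{C}$, $\sigma_z^{(\beta)}(m)=\sum_{d\in\mathbb{N},\ d^\beta\mid m}d^{\beta z}$. The generalized von Mangoldt function is $\Lambda^{(\beta)}_{k,m}(n)=\sum_{d\delta=n}c_d^{(\beta)}(m)\log^k\delta$ (so $\Lambda^{(1)}_{1,1}=\Lambda$). *)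

theory Defs
  imports "HOL-Analysis.Analysis"
begin

text \<open>The series converges
  (absolutely) for Re s > 1, which is an open set; hence the higher derivatives
  of this function at points with Re s > 1 are those of the Riemann zeta function.\<close>
definition riemann_zeta :: "complex \<Rightarrow> complex" where
  "riemann_zeta s = (\<Sum>n. 1 / (of_nat (Suc n)) powr s)"

definition gen_ramanujan :: "nat \<Rightarrow> nat \<Rightarrow> nat \<Rightarrow> complex" where
  "gen_ramanujan \<beta> q m =
     (\<Sum>h \<in> {h. h < q ^ \<beta> \<and> \<not> (\<exists>d>1. d ^ \<beta> dvd h \<and> d ^ \<beta> dvd q ^ \<beta>)}.
        exp (2 * of_real pi * \<i> * of_nat m * of_nat h / of_nat (q ^ \<beta>)))"

definition gen_sigma :: "nat \<Rightarrow> complex \<Rightarrow> nat \<Rightarrow> complex" where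
  "gen_sigma \<beta> z m = (\<Sum>d \<in> {d. 0 < d \<and> d ^ \<beta> dvd m}. (of_nat d) powr (of_nat \<beta> * z))"

definition gen_mangoldt :: "nat \<Rightarrow> nat \<Rightarrow> nat \<Rightarrow> nat \<Rightarrow> complex" where
  "gen_mangoldt \<beta> k m n =
     (\<Sum>d \<in> {d. d dvd n}. gen_ramanujan \<beta> d m * of_real (ln (real (n div d))) ^ k)"

end

theory Submission
  imports Defs "HOL-Computational_Algebra.Primes"
begin


lemma ln_le_powr_div:
  fixes x e :: real assumes "x > 0" "e > 0"
  shows "ln x \<le> x powr e / e"
proof -
  have "ln (x powr e) \<le> x powr e - 1" using assms by (intro ln_le_minus_one) auto
  hence "e * ln x \<le> x powr e" using assms by (simp add: ln_powr)
  thus ?thesis using assms by (simp add: field_simps)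
qed

lemma summable_ln_pow_powr:
  fixes \<sigma> :: real assumes "\<sigma> > 1"
  shows "summable (\<lambda>n. ln (real n) ^ j * real n powr (-\<sigma>))"
proof -
  define e where "e = (\<sigma> - 1) / (2 * (real j + 1))"
  have e: "e > 0" using assms by (simp add: e_def)
  have je: "real j * e - \<sigma> < -1"
  proof -
    have "real j * e \<le> (real j + 1) * e" using e by simp
    also have "\<dots> = (\<sigma> - 1)/2" using e_def by (simp add: field_simps)
    finally show ?thesis using assms by simp
  qed
  have S: "summable (\<lambda>n. real n powr (real j * e - \<sigma>) / e ^ j)"
    using je by (intro summable_divide) (simp add: summable_real_powr_iff)
  have B: "norm (ln (real n) ^ j * real n powr (-\<sigma>)) \<le> real n powr (real j * e - \<sigma>) / e ^ j" for n
  proof (cases "n = 0")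
    case True thus ?thesis by simp
  next
    case False
    hence n: "real n \<ge> 1" by simp
    have l0: "ln (real n) \<ge> 0" using n by simp
    have "ln (real n) ^ j \<le> (real n powr e / e) ^ j"
      using ln_le_powr_div[of "real n" e] e n l0 by (intro power_mono) auto
    also have "\<dots> = real n powr (real j * e) / e ^ j"
      using n by (simp add: power_divide powr_realpow[symmetric] powr_powr mult.commute)
    finally have "ln (real n) ^ j * real n powr (-\<sigma>) \<le> real n powr (real j * e) / e ^ j * real n powr (-\<sigma>)"
      by (intro mult_right_mono) auto
    also have "\<dots> = real n powr (real j * e - \<sigma>) / e ^ j"
      by (simp add: powr_add[symmetric])
    finally show ?thesis using l0 by simp
  qed
  show ?thesis by (rule summable_comparison_test'[OF S B])
qed

definition zt :: "nat \<Rightarrow> nat \<Rightarrow> complex \<Rightarrow> complex" where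
  "zt j n s = (- of_real (ln (real (Suc n))))^j / of_nat (Suc n) powr s"

definition Zs :: "nat \<Rightarrow> complex \<Rightarrow> complex" where
  "Zs j s = (\<Sum>n. zt j n s)"

lemma zt_alt: "zt j n = (\<lambda>s. (- of_real (ln (real (Suc n))))^j * exp (- (s * of_real (ln (real (Suc n))))))"
proof
  fix s
  have "Ln (of_nat (Suc n)) = of_real (ln (real (Suc n)))"
    by (metis Ln_of_real of_nat_0_less_iff of_real_of_nat_eq zero_less_Suc)
  moreover have "(of_nat (Suc n) :: complex) \<noteq> 0" by (metis of_nat_eq_0_iff Zero_not_Suc)
  ultimately show "zt j n s = (- of_real (ln (real (Suc n))))^j * exp (- (s * of_real (ln (real (Suc n)))))"
    unfolding zt_def powr_def by (simp add: exp_minus field_simps)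
qed

lemma zt_deriv: "(zt j n has_field_derivative zt (Suc j) n s) (at s)"
  unfolding zt_alt
  by (auto intro!: derivative_eq_intros simp: algebra_simps)

lemma norm_zt: "norm (zt j n z) = ln (real (Suc n)) ^ j * real (Suc n) powr (- Re z)"
proof -
  have "norm (of_nat (Suc n) powr z :: complex) = real (Suc n) powr Re z"
    by (subst norm_powr_real_powr) auto
  moreover have "ln (real (Suc n)) \<ge> 0" by simp
  ultimately show ?thesis unfolding zt_def
    by (simp add: norm_divide norm_power powr_minus_divide)
qed

lemma norm_zt_le: "Re z \<ge> a \<Longrightarrow> norm (zt j n z) \<le> ln (real (Suc n)) ^ j * real (Suc n) powr (- a)"
  unfolding norm_zt by (intro mult_left_mono powr_mono) auto

lemma summable_M: "a > 1 \<Longrightarrow> summable (\<lambda>n. ln (real (Suc n)) ^ j * real (Suc n) powr (- a))"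
  using summable_ln_pow_powr[of a j] by (subst summable_Suc_iff) simp

lemma summable_zt: "Re s > 1 \<Longrightarrow> summable (\<lambda>n. norm (zt j n s))"
  unfolding norm_zt using summable_M[of "Re s" j] by simp

lemma Zs_deriv:
  assumes "Re s > 1"
  shows "(Zs j has_field_derivative Zs (Suc j) s) (at s)"
proof -
  define a where "a = (1 + Re s) / 2"
  have a: "a > 1" "Re s > a" using assms by (auto simp: a_def)
  define S where "S = {z. Re z > a}"
  have S: "convex S" "open S" "s \<in> S" using a by (auto simp: S_def convex_halfspace_Re_gt open_halfspace_Re_gt)
  have bnd: "\<And>n x. x \<in> S \<Longrightarrow> norm (zt (Suc j) n x) \<le> ln (real (Suc n)) ^ Suc j * real (Suc n) powr (- a)"
    unfolding S_def by (rule norm_zt_le) simp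
  have uc: "uniformly_convergent_on S (\<lambda>n x. \<Sum>i<n. zt (Suc j) i x)"
    by (rule Weierstrass_m_test'_ev[OF _ summable_M[OF a(1), of "Suc j"]])
       (intro always_eventually allI ballI bnd)
  have "((\<lambda>x. \<Sum>n. zt j n x) has_field_derivative (\<Sum>n. zt (Suc j) n s)) (at s)"
    by (rule has_field_derivative_series'(2)[OF S(1) _ uc S(3)])
       (use S assms summable_zt in \<open>auto intro: has_field_derivative_at_within zt_deriv summable_norm_cancel simp: interior_open\<close>)
  thus ?thesis by (simp add: Zs_def[abs_def])
qed

lemma higher_deriv_zeta:
  "Re s > 1 \<Longrightarrow> (deriv ^^ k) riemann_zeta s = Zs k s"
proof (induction k arbitrary: s)
  case 0
  thus ?case by (simp add: riemann_zeta_def Zs_def zt_def)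
next
  case (Suc k)
  have "((deriv ^^ k) riemann_zeta has_field_derivative Zs (Suc k) s) (at s)"
    by (rule has_field_derivative_transform_within_open[OF Zs_deriv[OF Suc.prems] open_halfspace_Re_gt[of 1]])
       (use Suc in auto)
  thus ?case by (simp add: DERIV_imp_deriv)
qed



lemma dir_prod:
  fixes a b :: "nat \<Rightarrow> complex"
  assumes a: "(a has_sum A) {0<..}" and b: "(b has_sum B) {0<..}"
  shows "((\<lambda>n. \<Sum>d\<in>{d. d dvd n}. a d * b (n div d)) has_sum (A * B)) {0<..}"
proof -
  define P :: "nat set" where "P = {0<..}"
  have as: "(\<lambda>x. norm (a x)) summable_on P" using a unfolding P_def
    by (metis has_sum_imp_summable summable_on_iff_abs_summable_on_complex)
  have bs: "(\<lambda>x. norm (b x)) summable_on P" using b unfolding P_def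
    by (metis has_sum_imp_summable summable_on_iff_abs_summable_on_complex)
  have abs: "(\<lambda>z. norm ((\<lambda>(x,y). a x * b y) z)) summable_on Sigma P (\<lambda>_. P)"
  proof (rule Infinite_Sum.abs_summable_on_Sigma_iff[where f="\<lambda>(x,y). a x * b y", THEN iffD2], intro conjI ballI)
    fix x assume "x \<in> P"
    show "(\<lambda>y. norm (case (x, y) of (x, y) \<Rightarrow> a x * b y)) summable_on P"
      using summable_on_cmult_right[OF bs, of "norm (a x)"] by (simp add: norm_mult)
  next
    have "(\<lambda>x. norm (a x) * infsum (\<lambda>y. norm (b y)) P) summable_on P"
      using summable_on_cmult_left[OF as] by simp
    moreover have "norm (infsum (\<lambda>y. norm (case (x, y) of (x, y) \<Rightarrow> a x * b y)) P) = norm (a x) * infsum (\<lambda>y. norm (b y)) P" for x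
      by (simp add: norm_mult infsum_cmult_right' infsum_nonneg)
    ultimately show "(\<lambda>x. norm (infsum (\<lambda>y. norm (case (x, y) of (x, y) \<Rightarrow> a x * b y)) P)) summable_on P"
      by simp
  qed
  have sum2: "(\<lambda>(x,y). a x * b y) summable_on Sigma P (\<lambda>_. P)"
    using abs summable_on_iff_abs_summable_on_complex by blast
  have hs: "((\<lambda>(x,y). a x * b y) has_sum (A * B)) (Sigma P (\<lambda>_. P))"
  proof (rule has_sum_SigmaI[OF _ _ sum2])
    show "((\<lambda>y. case (x, y) of (x, y) \<Rightarrow> a x * b y) has_sum a x * B) P" for x
      using has_sum_cmult_right[OF b, of "a x"] by (simp add: P_def)
    show "((\<lambda>x. a x * B) has_sum A * B) P"
      using has_sum_cmult_left[OF a, of B] by (simp add: P_def)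
  qed
  have hs2: "((\<lambda>(n,d). a d * b (n div d)) has_sum (A * B)) (Sigma P (\<lambda>n. {d. d dvd n}))"
  proof (subst has_sum_reindex_bij_witness[where j = "\<lambda>(n,d). (d, n div d)" and i = "\<lambda>(x,y). (x*y, x)"
        and T = "Sigma P (\<lambda>_. P)" and h = "\<lambda>(x,y). a x * b y" and s' = "A * B"])
    show "((\<lambda>(x,y). a x * b y) has_sum A * B) (Sigma P (\<lambda>_. P))" by (rule hs)
  qed (auto simp: P_def elim: dvdE intro: dvd_div_mult_self)
  show ?thesis unfolding P_def[symmetric]
    by (rule has_sum_SigmaD[OF hs2]) (auto simp: P_def finite_divisors_nat)
qed



definition mu :: "nat \<Rightarrow> int" where
  "mu n = (if \<Prod>(prime_factors n) = n then (-1) ^ card (prime_factors n) else 0)"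

lemma abs_mu_le: "\<bar>mu n\<bar> \<le> 1"
  by (simp add: mu_def)

lemma pf_prod_primes:
  fixes S :: "nat set"
  assumes "finite S" "\<And>p. p \<in> S \<Longrightarrow> prime p"
  shows "prime_factors (\<Prod>S) = S"
proof -
  have h0: "0 \<notin> id ` S" using assms(2) by (auto dest: prime_gt_0_nat)
  have "prime_factors (prod id S) = \<Union>((prime_factors \<circ> id) ` S)"
    by (rule prime_factors_prod[OF assms(1) h0])
  also have "\<dots> = S" using assms(2) by (auto simp: prime_prime_factors)
  finally show ?thesis by simp
qed

lemma prod_primes_dvd:
  fixes S :: "nat set"
  assumes "finite S" "S \<subseteq> prime_factors n"
  shows "\<Prod>S dvd n"
  using assms
proof (induction S rule: finite_induct)
  case empty thus ?case by simp
next
  case (insert p S)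
  have p: "prime p" "p dvd n" using insert.prems by (auto simp: in_prime_factors_iff)
  have "\<not> p dvd \<Prod>S"
  proof
    assume "p dvd \<Prod>S"
    then obtain q where "q \<in> S" "p dvd q"
      using p(1) insert.hyps(1) by (auto simp: prime_dvd_prod_iff)
    moreover have "prime q" using \<open>q \<in> S\<close> insert.prems by (auto simp: in_prime_factors_iff)
    ultimately have "p = q" using p(1) by (simp add: primes_dvd_imp_eq)
    thus False using \<open>q \<in> S\<close> insert.hyps(2) by simp
  qed
  hence "coprime p (\<Prod>S)" using p(1) by (simp add: prime_imp_coprime)
  moreover have "\<Prod>S dvd n" using insert by simp
  ultimately show ?case using p(2) insert.hyps by (simp add: divides_mult)
qed

lemma sum_pow_minus_one:
  fixes P :: "'a set" assumes "finite P"
  shows "(\<Sum>X\<in>Pow P. (-1::int) ^ card X) = (if P = {} then 1 else 0)"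
proof -
  have "(\<Prod>x\<in>P. (1::int) - 1) = (\<Sum>X\<in>Pow P. (-1::int) ^ card X)"
    using prod_diff_conv_sum[OF assms, of "\<lambda>_. 1" "\<lambda>_. 1::int"] by simp
  thus ?thesis using assms by (simp add: power_0_left card_eq_0_iff)
qed

lemma mu_sum:
  assumes "n > 0"
  shows "(\<Sum>d\<in>{d. d dvd n}. mu d) = (if n = 1 then 1 else 0)"
proof -
  define P where "P = prime_factors n"
  have fin: "finite {d. d dvd n}" using assms by (simp add: finite_divisors_nat)
  have img: "(\<lambda>S. \<Prod>S) ` Pow P = {d. d dvd n \<and> \<Prod>(prime_factors d) = d}"
  proof (intro equalityI subsetI)
    fix d assume "d \<in> (\<lambda>S. \<Prod>S) ` Pow P"
    then obtain S where S: "S \<subseteq> P" "d = \<Prod>S" by auto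
    have fS: "finite S" using S(1) P_def finite_subset by auto
    have pr: "\<And>p. p \<in> S \<Longrightarrow> prime p" using S(1) P_def by (auto simp: in_prime_factors_iff)
    show "d \<in> {d. d dvd n \<and> \<Prod>(prime_factors d) = d}"
      using S fS pf_prod_primes[OF fS pr] prod_primes_dvd[OF fS] P_def by auto
  next
    fix d assume "d \<in> {d. d dvd n \<and> \<Prod>(prime_factors d) = d}"
    hence d: "d dvd n" "\<Prod>(prime_factors d) = d" by auto
    have "prime_factors d \<subseteq> P" using d(1) assms unfolding P_def
      by (auto simp: in_prime_factors_iff intro: dvd_trans)
    thus "d \<in> (\<lambda>S. \<Prod>S) ` Pow P" using d(2) by (metis Pow_iff image_eqI)
  qed
  have inj: "inj_on (\<lambda>S. \<Prod>S) (Pow P)"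
  proof (rule inj_onI)
    fix S T assume ST: "S \<in> Pow P" "T \<in> Pow P" "\<Prod>S = \<Prod>T"
    have fS: "finite S" "finite T" using ST P_def finite_subset by auto
    have "\<And>p. p \<in> S \<Longrightarrow> prime p" "\<And>p. p \<in> T \<Longrightarrow> prime p"
      using ST P_def by (auto simp: in_prime_factors_iff)
    thus "S = T" using pf_prod_primes fS ST(3) by metis
  qed
  have "(\<Sum>d\<in>{d. d dvd n}. mu d) = (\<Sum>d\<in>{d. d dvd n \<and> \<Prod>(prime_factors d) = d}. mu d)"
    by (rule sum.mono_neutral_right[OF fin]) (auto simp: mu_def)
  also have "\<dots> = (\<Sum>S\<in>Pow P. mu (\<Prod>S))"
    unfolding img[symmetric] by (rule sum.reindex[OF inj, unfolded o_def])
  also have "\<dots> = (\<Sum>S\<in>Pow P. (-1) ^ card S)"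
  proof (rule sum.cong[OF refl])
    fix S assume S: "S \<in> Pow P"
    have fS: "finite S" using S P_def finite_subset by auto
    have "\<And>p. p \<in> S \<Longrightarrow> prime p" using S P_def by (auto simp: in_prime_factors_iff)
    thus "mu (\<Prod>S) = (-1) ^ card S" using pf_prod_primes[OF fS] by (simp add: mu_def)
  qed
  also have "\<dots> = (if P = {} then 1 else 0)" by (rule sum_pow_minus_one) (simp add: P_def)
  also have "(P = {}) = (n = 1)" using assms unfolding P_def
    by (metis prime_factorization_empty_iff set_mset_eq_empty_iff nat_dvd_1_iff_1 not_gr0)
  finally show ?thesis .
qed



lemma geom_root_sum:
  assumes "N > 0"
  shows "(\<Sum>h<N. exp (2 * of_real pi * \<i> * of_nat m * of_nat h / of_nat N)) =
         (if N dvd m then of_nat N else (0::complex))"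
proof -
  define \<omega> where "\<omega> = exp (2 * of_real pi * \<i> * of_nat m / of_nat N)"
  have t: "exp (2 * of_real pi * \<i> * of_nat m * of_nat h / of_nat N) = \<omega> ^ h" for h
  proof -
    have "2 * of_real pi * \<i> * of_nat m * of_nat h / of_nat N = of_nat h * (2 * of_real pi * \<i> * of_nat m / of_nat N)"
      by simp
    thus ?thesis unfolding \<omega>_def by (simp only: exp_of_nat_mult)
  qed
  have wN: "\<omega> ^ N = 1"
  proof -
    have "\<omega> ^ N = exp (of_nat N * (2 * of_real pi * \<i> * of_nat m / of_nat N))"
      unfolding \<omega>_def by (simp only: exp_of_nat_mult)
    also have "of_nat N * (2 * of_real pi * \<i> * of_nat m / of_nat N) = of_nat m * (2 * of_real pi * \<i>)"
      using assms by simp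
    also have "exp \<dots> = 1" by (simp only: exp_of_nat_mult exp_two_pi_i power_one)
    finally show ?thesis .
  qed
  show ?thesis
  proof (cases "N dvd m")
    case True
    then obtain k where k: "m = N * k" by auto
    have "\<omega> = exp (of_nat k * (2 * of_real pi * \<i>))"
      unfolding \<omega>_def k using assms by (simp add: field_simps)
    also have "\<dots> = 1" by (simp only: exp_of_nat_mult exp_two_pi_i power_one)
    finally show ?thesis using True by (simp add: t)
  next
    case False
    have "\<omega> \<noteq> 1"
    proof
      assume "\<omega> = 1"
      then obtain j :: int where j: "Im (2 * of_real pi * \<i> * of_nat m / of_nat N) = of_int (2 * j) * pi"
        unfolding \<omega>_def exp_eq_1 by blast
      hence "2 * pi * real m / real N = 2 * real_of_int j * pi" by simp
      hence "real m = real_of_int j * real N" using assms by (simp add: field_simps)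
      hence "int m = j * int N" by (metis of_int_eq_iff of_int_mult of_int_of_nat_eq)
      hence "int N dvd int m" by simp
      thus False using False by simp
    qed
    thus ?thesis using False by (simp add: t sum_gp_strict wN)
  qed
qed

lemma lcm_pow_dvd:
  fixes e g h b :: nat
  assumes "e ^ b dvd h" "g ^ b dvd h"
  shows "lcm e g ^ b dvd h"
proof (cases "b = 0 \<or> e = 0 \<or> g = 0")
  case True
  thus ?thesis using assms by (auto simp: zero_power)
next
  case False
  hence pos: "b > 0" "e > 0" "g > 0" by auto
  have "lcm e g ^ b * gcd e g ^ b = (e * g) ^ b"
    by (metis mult.commute power_mult_distrib prod_gcd_lcm_nat)
  also have "\<dots> = lcm (e ^ b) (g ^ b) * gcd (e ^ b) (g ^ b)"
    by (metis mult.commute power_mult_distrib prod_gcd_lcm_nat)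
  also have "gcd (e ^ b) (g ^ b) = gcd e g ^ b" by simp
  finally have "lcm e g ^ b = lcm (e ^ b) (g ^ b)" using pos by simp
  thus ?thesis using assms by simp
qed

lemma char_cop:
  fixes n g h' b :: nat
  assumes b: "b \<ge> 1" and g: "g dvd n" and n: "n > 0"
  shows "(\<not> (\<exists>d>1. d ^ b dvd h' \<and> d ^ b dvd (n div g) ^ b)) \<longleftrightarrow>
         (\<forall>e. e dvd n \<and> e ^ b dvd g ^ b * h' \<longrightarrow> e dvd g)"
proof -
  have gpos: "g > 0" using g n by (auto intro: Nat.gr0I)
  have ng: "n = g * (n div g)" using g by simp
  show ?thesis
  proof
    assume H: "\<not> (\<exists>d>1. d ^ b dvd h' \<and> d ^ b dvd (n div g) ^ b)"
    show "\<forall>e. e dvd n \<and> e ^ b dvd g ^ b * h' \<longrightarrow> e dvd g"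
    proof (intro allI impI)
      fix e assume e: "e dvd n \<and> e ^ b dvd g ^ b * h'"
      define l where "l = lcm e g"
      have l1: "l ^ b dvd g ^ b * h'" unfolding l_def by (rule lcm_pow_dvd) (use e in auto)
      have l2: "l dvd n" unfolding l_def using e g by simp
      have gl: "g dvd l" unfolding l_def by simp
      then obtain d where d: "l = g * d" by auto
      have lpos: "l > 0" using l2 n by (auto intro: Nat.gr0I)
      have dpos: "d > 0" using lpos d by simp
      have "g ^ b * d ^ b dvd g ^ b * h'" using l1 d by (simp add: power_mult_distrib)
      hence dh: "d ^ b dvd h'" using gpos by simp
      obtain k where k: "n = g * d * k" using l2 d by (auto elim: dvdE)
      have "n div g = d * k" using k gpos by simp
      hence "d dvd n div g" by simp
      hence "d ^ b dvd (n div g) ^ b" by (rule dvd_power_same)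
      hence "\<not> d > 1" using H dh by blast
      hence "d = 1" using dpos by simp
      hence "l = g" using d by simp
      thus "e dvd g" unfolding l_def using dvd_lcm1[of e g] by simp
    qed
  next
    assume H: "\<forall>e. e dvd n \<and> e ^ b dvd g ^ b * h' \<longrightarrow> e dvd g"
    show "\<not> (\<exists>d>1. d ^ b dvd h' \<and> d ^ b dvd (n div g) ^ b)"
    proof
      assume "\<exists>d>1. d ^ b dvd h' \<and> d ^ b dvd (n div g) ^ b"
      then obtain d where d: "d > 1" "d ^ b dvd h'" "d ^ b dvd (n div g) ^ b" by blast
      have "d dvd n div g" using d(3) b by simp
      hence "g * d dvd g * (n div g)" by (rule mult_dvd_mono[OF dvd_refl])
      hence "g * d dvd n" using ng by simp
      moreover have "(g * d) ^ b dvd g ^ b * h'" using d(2) by (simp add: power_mult_distrib)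
      ultimately have "g * d dvd g" using H by blast
      hence "g * d \<le> g" using gpos by (simp add: dvd_imp_le)
      thus False using d(1) gpos by simp
    qed
  qed
qed


lemma div_div_self_nat:
  fixes d n :: nat assumes "d dvd n" "n > 0"
  shows "n div (n div d) = d" "n div d dvd n"
proof -
  obtain k where k: "n = d * k" using assms(1) by auto
  have "d > 0" "k > 0" using k assms(2) by auto
  thus "n div (n div d) = d" "n div d dvd n" using k by auto
qed

lemma ram_sum:
  fixes b n m :: nat
  assumes b: "b \<ge> 1" and n: "n > 0"
  shows "(\<Sum>d\<in>{d. d dvd n}. gen_ramanujan b d m) = (if n ^ b dvd m then of_nat (n ^ b) else 0)"
proof -
  define N where "N = n ^ b"
  define cop where "cop q = {h. h < q ^ b \<and> \<not> (\<exists>d>1. d ^ b dvd h \<and> d ^ b dvd q ^ b)}" for q :: nat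
  define E where "E q h = exp (2 * of_real pi * \<i> * of_nat m * of_nat h / of_nat (q ^ b))" for q h :: nat
  define D where "D = {d. d dvd n}"
  define Sg where "Sg h = {e. e dvd n \<and> e ^ b dvd h}" for h
  define G where "G h = Max (Sg h)" for h
  have finD: "finite D" using n by (simp add: D_def finite_divisors_nat)
  have fincop: "finite (cop q)" for q
    by (rule finite_subset[of _ "{..<q ^ b}"]) (auto simp: cop_def)
  have finS: "finite (Sg h)" for h unfolding Sg_def using finD D_def by (auto intro: finite_subset)
  have oneS: "1 \<in> Sg h" for h unfolding Sg_def by simp
  have GS: "G h \<in> Sg h" for h unfolding G_def using finS oneS by (intro Max_in) auto
  have Gmax: "e dvd G h" if "e \<in> Sg h" for e h
  proof -
    have "lcm e (G h) \<in> Sg h" using that GS[of h] unfolding Sg_def by (auto intro: lcm_pow_dvd)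
    hence le: "lcm e (G h) \<le> G h" unfolding G_def using finS by simp
    have "G h > 0" using GS[of h] n unfolding Sg_def by (auto intro: Nat.gr0I)
    hence "G h dvd lcm e (G h)" "lcm e (G h) > 0" using that n unfolding Sg_def
      by (auto simp: lcm_pos_nat intro: Nat.gr0I)
    hence "G h \<le> lcm e (G h)" by (simp add: dvd_imp_le)
    hence "lcm e (G h) = G h" using le by simp
    thus ?thesis using dvd_lcm1[of e "G h"] by simp
  qed
  have Guniq: "G h = g" if "g \<in> Sg h" "\<And>e. e \<in> Sg h \<Longrightarrow> e dvd g" for g h
  proof -
    have "g > 0" using that(1) n unfolding Sg_def by (auto intro: Nat.gr0I)
    hence "\<And>e. e \<in> Sg h \<Longrightarrow> e \<le> g" using that(2) by (simp add: dvd_imp_le)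
    thus ?thesis unfolding G_def using that(1) finS by (intro Max_eqI) auto
  qed
  have Gpos: "G h > 0" for h using GS[of h] n unfolding Sg_def by (auto intro: Nat.gr0I)
  have Gdvd: "G h dvd n" "G h ^ b dvd h" for h using GS[of h] unfolding Sg_def by auto
  have Npow: "N = g ^ b * (n div g) ^ b" if "g dvd n" for g
    unfolding N_def using that by (metis dvd_mult_div_cancel power_mult_distrib)
  have "(\<Sum>x\<in>Sigma D (\<lambda>g. cop (n div g)). E (n div fst x) (snd x)) = (\<Sum>h\<in>{..<N}. E n h)"
  proof (rule sum.reindex_bij_witness[where j = "\<lambda>(g,h'). g ^ b * h'" and i = "\<lambda>h. (G h, h div G h ^ b)"])
    fix a assume a: "a \<in> Sigma D (\<lambda>g. cop (n div g))"
    obtain g h' where gh: "a = (g, h')" by (cases a)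
    have g: "g dvd n" and h': "h' < (n div g) ^ b" "\<not> (\<exists>d>1. d ^ b dvd h' \<and> d ^ b dvd (n div g) ^ b)"
      using a gh by (auto simp: D_def cop_def)
    have gpos: "g > 0" using g n by (auto intro: Nat.gr0I)
    have all: "\<forall>e. e dvd n \<and> e ^ b dvd g ^ b * h' \<longrightarrow> e dvd g"
      using char_cop[OF b g n, of h'] h'(2) by blast
    have "G (g ^ b * h') = g"
      by (rule Guniq) (use g all in \<open>auto simp: Sg_def\<close>)
    thus "(\<lambda>h. (G h, h div G h ^ b)) ((\<lambda>(g,h'). g ^ b * h') a) = a" using gh gpos by simp
    have "g ^ b * h' < g ^ b * (n div g) ^ b" using h'(1) gpos by simp
    thus "(\<lambda>(g,h'). g ^ b * h') a \<in> {..<N}" using gh Npow[OF g] by simp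
    have "E n (g ^ b * h') = E (n div g) h'"
    proof -
      have "of_nat (n ^ b) = (of_nat (g ^ b) * of_nat ((n div g) ^ b) :: complex)"
        using Npow[OF g] N_def by (metis of_nat_mult)
      moreover have "(of_nat (g ^ b) :: complex) \<noteq> 0" using gpos by simp
      ultimately show ?thesis unfolding E_def using gpos by (simp add: field_simps)
    qed
    thus "E n ((\<lambda>(g,h'). g ^ b * h') a) = E (n div fst a) (snd a)" using gh by simp
  next
    fix h assume h: "h \<in> {..<N}"
    show "(\<lambda>(g,h'). g ^ b * h') ((\<lambda>h. (G h, h div G h ^ b)) h) = h"
      using Gdvd(2)[of h] by simp
    have hl: "G h ^ b * (h div G h ^ b) < G h ^ b * (n div G h) ^ b"
      using h Gdvd(2)[of h] Npow[OF Gdvd(1)[of h]] by simp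
    hence lt: "h div G h ^ b < (n div G h) ^ b" by (simp add: mult_less_cancel1)
    have "\<forall>e. e dvd n \<and> e ^ b dvd G h ^ b * (h div G h ^ b) \<longrightarrow> e dvd G h"
      using Gmax[of _ h] Gdvd(2)[of h] by (simp add: Sg_def)
    hence "\<not> (\<exists>d>1. d ^ b dvd (h div G h ^ b) \<and> d ^ b dvd (n div G h) ^ b)"
      using char_cop[OF b Gdvd(1)[of h] n, of "h div G h ^ b"] by blast
    thus "(\<lambda>h. (G h, h div G h ^ b)) h \<in> Sigma D (\<lambda>g. cop (n div g))"
      using lt Gdvd(1)[of h] by (simp add: D_def cop_def)
  qed
  also have "\<dots> = (if N dvd m then of_nat N else 0)"
    unfolding E_def N_def by (rule geom_root_sum) (use n in simp)
  finally have eq1: "(\<Sum>x\<in>Sigma D (\<lambda>g. cop (n div g)). E (n div fst x) (snd x)) = (if N dvd m then of_nat N else 0)" .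
  have "(\<Sum>x\<in>Sigma D (\<lambda>g. cop (n div g)). E (n div fst x) (snd x)) = (\<Sum>g\<in>D. \<Sum>h\<in>cop (n div g). E (n div g) h)"
    by (subst sum.Sigma[OF finD]) (auto simp: fincop split_beta)
  also have "\<dots> = (\<Sum>g\<in>D. gen_ramanujan b (n div g) m)"
    unfolding gen_ramanujan_def cop_def E_def by simp
  also have "\<dots> = (\<Sum>d\<in>D. gen_ramanujan b d m)"
    by (rule sum.reindex_bij_witness[where i = "\<lambda>d. n div d" and j = "\<lambda>d. n div d"])
       (auto simp: D_def n div_div_self_nat)
  finally show ?thesis using eq1 by (simp add: D_def N_def)
qed



lemma dvd_div_pos: "d dvd n \<Longrightarrow> (n::nat) > 0 \<Longrightarrow> n div d > 0"
  by (auto elim!: dvdE)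

lemma moebius_inversion:
  fixes a f :: "nat \<Rightarrow> complex"
  assumes H: "\<And>n. n > 0 \<Longrightarrow> (\<Sum>d\<in>{d. d dvd n}. a d) = f n" and n: "n > 0"
  shows "a n = (\<Sum>d\<in>{d. d dvd n}. of_int (mu d) * f (n div d))"
proof -
  define D where "D n = {d. d dvd n}" for n :: nat
  have finD: "finite (D q)" if "q > 0" for q using that by (simp add: D_def finite_divisors_nat)
  have key: "(d dvd n \<and> e dvd n div d) \<longleftrightarrow> (e dvd n \<and> d dvd n div e)" for d e
  proof -
    have "(d dvd n \<and> e dvd n div d) \<longleftrightarrow> d * e dvd n" using n
      by (metis div_dvd_iff_mult dvd_div_iff_mult dvd_mult_left less_nat_zero_code mult.commute not_gr0 dvd_0_left_iff)
    moreover have "(e dvd n \<and> d dvd n div e) \<longleftrightarrow> e * d dvd n" using n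
      by (metis div_dvd_iff_mult dvd_div_iff_mult dvd_mult_left less_nat_zero_code mult.commute not_gr0 dvd_0_left_iff)
    ultimately show ?thesis by (simp add: mult.commute)
  qed
  have "(\<Sum>d\<in>D n. of_int (mu d) * f (n div d)) = (\<Sum>d\<in>D n. \<Sum>e\<in>D (n div d). of_int (mu d) * a e)"
  proof (rule sum.cong[OF refl])
    fix d assume "d \<in> D n"
    hence "n div d > 0" using n by (auto simp: D_def intro!: Nat.gr0I elim!: dvdE)
    thus "of_int (mu d) * f (n div d) = (\<Sum>e\<in>D (n div d). of_int (mu d) * a e)"
      using H[of "n div d"] by (simp add: D_def sum_distrib_left[symmetric])
  qed
  also have "\<dots> = (\<Sum>x\<in>Sigma (D n) (\<lambda>d. D (n div d)). of_int (mu (fst x)) * a (snd x))"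
    by (subst sum.Sigma) (auto simp: finD n D_def split_beta dvd_div_pos intro!: finite_divisors_nat)
  also have "\<dots> = (\<Sum>x\<in>Sigma (D n) (\<lambda>e. D (n div e)). of_int (mu (snd x)) * a (fst x))"
  proof (rule sum.reindex_bij_witness[where i = "\<lambda>(x,y). (y,x)" and j = "\<lambda>(x,y). (y,x)"])
    fix x assume "x \<in> Sigma (D n) (\<lambda>e. D (n div e))"
    thus "(\<lambda>(x,y). (y,x)) x \<in> Sigma (D n) (\<lambda>d. D (n div d))" using key by (auto simp: D_def)
  next
    fix x assume "x \<in> Sigma (D n) (\<lambda>d. D (n div d))"
    thus "(\<lambda>(x,y). (y,x)) x \<in> Sigma (D n) (\<lambda>e. D (n div e))" using key by (auto simp: D_def)
  qed auto
  also have "\<dots> = (\<Sum>e\<in>D n. \<Sum>d\<in>D (n div e). of_int (mu d) * a e)"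
    by (subst sum.Sigma) (auto simp: finD n D_def split_beta dvd_div_pos intro!: finite_divisors_nat)
  also have "\<dots> = (\<Sum>e\<in>D n. a e * (\<Sum>d\<in>D (n div e). of_int (mu d)))"
    by (simp add: sum_distrib_left mult.commute)
  also have "\<dots> = (\<Sum>e\<in>D n. a e * (if n div e = 1 then 1 else 0))"
  proof (rule sum.cong[OF refl])
    fix e assume "e \<in> D n"
    hence "n div e > 0" using n by (auto simp: D_def intro!: Nat.gr0I elim!: dvdE)
    thus "a e * (\<Sum>d\<in>D (n div e). of_int (mu d)) = a e * (if n div e = 1 then 1 else 0)"
      using mu_sum[of "n div e"] unfolding D_def by (simp del: of_int_sum add: of_int_sum[symmetric])
  qed
  also have "\<dots> = (\<Sum>e\<in>D n. if e = n then a e else 0)"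
  proof (rule sum.cong[OF refl])
    fix e assume "e \<in> D n"
    hence "(n div e = 1) = (e = n)" using n by (auto simp: D_def elim!: dvdE)
    thus "a e * (if n div e = 1 then 1 else 0) = (if e = n then a e else 0)" by simp
  qed
  also have "\<dots> = a n" using finD[OF n] by (simp add: D_def)
  finally show ?thesis by (simp add: D_def)
qed


lemma hs_shift:
  fixes f :: "nat \<Rightarrow> complex"
  assumes "summable (\<lambda>n. norm (f (Suc n)))"
  shows "(f has_sum (\<Sum>n. f (Suc n))) {0<..}"
proof -
  have "((\<lambda>n. f (Suc n)) has_sum (\<Sum>n. f (Suc n))) UNIV"
    by (rule norm_summable_imp_has_sum[OF assms summable_sums[OF summable_norm_cancel[OF assms]]])
  moreover have "((\<lambda>n. f (Suc n)) has_sum (\<Sum>n. f (Suc n))) UNIV = (f has_sum (\<Sum>n. f (Suc n))) {0<..}"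
    by (rule has_sum_reindex_bij_witness[where i = "\<lambda>n. n - 1" and j = Suc]) auto
  ultimately show ?thesis by simp
qed

lemma hs_unshift:
  fixes f :: "nat \<Rightarrow> complex"
  assumes "(f has_sum S) {0<..}"
  shows "(\<lambda>n. f (Suc n)) sums S" "summable (\<lambda>n. norm (f (Suc n)))"
proof -
  have "((\<lambda>n. f (Suc n)) has_sum S) UNIV = (f has_sum S) {0<..}"
    by (rule has_sum_reindex_bij_witness[where i = "\<lambda>n. n - 1" and j = Suc]) auto
  hence h: "((\<lambda>n. f (Suc n)) has_sum S) UNIV" using assms by simp
  thus "(\<lambda>n. f (Suc n)) sums S" by (rule has_sum_imp_sums)
  have "(\<lambda>n. f (Suc n)) summable_on UNIV" using h by (rule has_sum_imp_summable)
  hence "(\<lambda>n. norm (f (Suc n))) summable_on UNIV" by (rule summable_on_iff_abs_summable_on_complex[THEN iffD1])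
  thus "summable (\<lambda>n. norm (f (Suc n)))" by (simp add: summable_on_UNIV_nonneg_real_iff)
qed

lemma powr_split:
  assumes "d dvd n" "n > 0"
  shows "(of_nat n :: complex) powr s = of_nat d powr s * of_nat (n div d) powr s"
proof -
  have "(of_nat n :: complex) = of_nat d * of_nat (n div d)" using assms(1) by (simp flip: of_nat_mult)
  thus ?thesis by (simp add: powr_times_real)
qed

lemma conv_weight:
  fixes X Y :: "nat \<Rightarrow> complex"
  assumes "n > 0"
  shows "(\<Sum>d\<in>{d. d dvd n}. (X d / of_nat d powr s) * (Y (n div d) / of_nat (n div d) powr s)) =
         (\<Sum>d\<in>{d. d dvd n}. X d * Y (n div d)) / of_nat n powr s"
  unfolding sum_divide_distrib
proof (rule sum.cong[OF refl])
  fix d assume "d \<in> {d. d dvd n}"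
  hence "(of_nat n :: complex) powr s = of_nat d powr s * of_nat (n div d) powr s"
    using assms by (intro powr_split) auto
  thus "(X d / of_nat d powr s) * (Y (n div d) / of_nat (n div d) powr s) = X d * Y (n div d) / of_nat n powr s"
    by simp
qed



theorem mainTheorem8:
  fixes \<beta> k m :: nat and s :: complex
  assumes "\<beta> \<ge> 1" and "k \<ge> 1" and "m \<ge> 1" and "Re s > 1"
  shows "summable (\<lambda>n. norm (gen_mangoldt \<beta> k m (Suc n) / (of_nat (Suc n)) powr s))
    \<and> (\<lambda>n. gen_mangoldt \<beta> k m (Suc n) / (of_nat (Suc n)) powr s) sums
        ((-1) ^ k * gen_sigma \<beta> (1 - s / of_nat \<beta>) m
           * (deriv ^^ k) riemann_zeta s / riemann_zeta s)"
proof -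
  note b = assms(1) and s = assms(4)
  define Mw where "Mw n = of_int (mu n) / (of_nat n :: complex) powr s" for n
  define Ow where "Ow n = 1 / (of_nat n :: complex) powr s" for n
  define Lw where "Lw n = of_real (ln (real n)) ^ k / (of_nat n :: complex) powr s" for n
  define F where "F n = (if n ^ \<beta> dvd m then of_nat (n ^ \<beta>) else 0 :: complex)" for n
  define Fw where "Fw n = F n / (of_nat n :: complex) powr s" for n
  define c where "c n = gen_ramanujan \<beta> n m" for n
  define Fset where "Fset = {n. 0 < n \<and> n ^ \<beta> dvd m}"
  define Msum where "Msum = (\<Sum>n. Mw (Suc n))"
  define Lsum where "Lsum = (\<Sum>n. Lw (Suc n))"
  define Fsum where "Fsum = (\<Sum>n\<in>Fset. Fw n)"

  have Ow_zt: "Ow (Suc n) = zt 0 n s" for n by (simp add: Ow_def zt_def)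
  have hO: "(Ow has_sum riemann_zeta s) {0<..}"
  proof -
    have "(Ow has_sum (\<Sum>n. Ow (Suc n))) {0<..}"
      by (rule hs_shift) (use summable_zt[OF s, of 0] Ow_zt in simp)
    moreover have "(\<Sum>n. Ow (Suc n)) = riemann_zeta s" by (simp add: Ow_def riemann_zeta_def)
    ultimately show ?thesis by simp
  qed
  have hM: "(Mw has_sum Msum) {0<..}" unfolding Msum_def
  proof (rule hs_shift)
    have "norm (Mw (Suc n)) \<le> norm (zt 0 n s)" for n
    proof -
      have "norm (of_int (mu (Suc n)) :: complex) \<le> 1" using abs_mu_le[of "Suc n"]
        by (simp only: norm_of_int)
      thus ?thesis unfolding Mw_def zt_def norm_divide
        by (intro divide_right_mono) auto
    qed
    thus "summable (\<lambda>n. norm (Mw (Suc n)))"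
      by (intro summable_comparison_test'[OF summable_zt[OF s, of 0], where N=0]) auto
  qed
  have Lw_zt: "Lw (Suc n) = (-1) ^ k * zt k n s" for n
  proof -
    have pm: "(-1::complex) ^ k * (-1) ^ k = 1" by (simp flip: power_mult_distrib)
    have "zt k n s = (-1) ^ k * Lw (Suc n)" unfolding zt_def Lw_def
      by (subst power_minus) (simp only: times_divide_eq_right)
    hence "(-1) ^ k * zt k n s = ((-1) ^ k * (-1) ^ k) * Lw (Suc n)" by (simp only: mult.assoc)
    thus ?thesis using pm by simp
  qed
  have hL: "(Lw has_sum Lsum) {0<..}" unfolding Lsum_def
    by (rule hs_shift) (use summable_zt[OF s, of k] in \<open>simp add: Lw_zt norm_mult norm_power\<close>)
  have Lsum_eq: "Lsum = (-1) ^ k * Zs k s"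
    unfolding Lsum_def Lw_zt Zs_def
    by (rule suminf_mult[OF summable_norm_cancel[OF summable_zt[OF s]]])
  have finF: "finite Fset"
  proof (rule finite_subset[of _ "{..m}"])
    show "Fset \<subseteq> {..m}"
    proof
      fix n assume "n \<in> Fset"
      hence n: "n > 0" "n ^ \<beta> dvd m" by (auto simp: Fset_def)
      have "n ^ 1 \<le> n ^ \<beta>" using n(1) b by (intro power_increasing) auto
      hence "n \<le> n ^ \<beta>" by simp
      also have "\<dots> \<le> m" using n(2) assms(3) by (simp add: dvd_imp_le)
      finally show "n \<in> {..m}" by simp
    qed
  qed simp
  have hF: "(Fw has_sum Fsum) {0<..}"
  proof -
    have "(Fw has_sum Fsum) Fset" unfolding Fsum_def using finF by simp
    moreover have "(Fw has_sum Fsum) Fset = (Fw has_sum Fsum) {0<..}"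
      by (rule has_sum_cong_neutral) (auto simp: Fset_def Fw_def F_def)
    ultimately show ?thesis by simp
  qed
  have Fsum_eq: "Fsum = gen_sigma \<beta> (1 - s / of_nat \<beta>) m"
    unfolding Fsum_def gen_sigma_def Fset_def
  proof (rule sum.cong[OF refl])
    fix d assume d: "d \<in> {d. 0 < d \<and> d ^ \<beta> dvd m}"
    have "of_nat \<beta> * (1 - s / of_nat \<beta>) = of_nat \<beta> - s" using b by (simp add: field_simps)
    hence "(of_nat d :: complex) powr (of_nat \<beta> * (1 - s / of_nat \<beta>)) = of_nat d powr of_nat \<beta> / of_nat d powr s"
      by (simp add: powr_diff)
    also have "(of_nat d :: complex) powr of_nat \<beta> = of_nat (d ^ \<beta>)" using d by (simp add: powr_nat')
    finally show "Fw d = (of_nat d :: complex) powr (of_nat \<beta> * (1 - s / of_nat \<beta>))"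
      using d by (simp add: Fw_def F_def)
  qed
  have P1: "((\<lambda>n. \<Sum>d\<in>{d. d dvd n}. Mw d * Ow (n div d)) has_sum (Msum * riemann_zeta s)) {0<..}"
    by (rule dir_prod[OF hM hO])
  have E1: "(\<Sum>d\<in>{d. d dvd n}. Mw d * Ow (n div d)) = (if n = 1 then 1 else 0)" if "n \<in> {0<..}" for n
  proof -
    have "(\<Sum>d\<in>{d. d dvd n}. Mw d * Ow (n div d)) = (\<Sum>d\<in>{d. d dvd n}. of_int (mu d) * 1) / of_nat n powr s"
      unfolding Mw_def Ow_def using conv_weight[of n "\<lambda>d. of_int (mu d)" s "\<lambda>_. 1"] that by simp
    also have "(\<Sum>d\<in>{d. d dvd n}. (of_int (mu d) :: complex) * 1) = of_int (\<Sum>d\<in>{d. d dvd n}. mu d)" by simp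
    also have "\<dots> = (if n = 1 then 1 else 0)" using mu_sum[of n] that by simp
    finally show ?thesis by auto
  qed
  have "((\<lambda>n::nat. if n = 1 then 1 else 0) has_sum (Msum * riemann_zeta s)) {0<..}"
    by (rule has_sum_cong[THEN iffD1, OF _ P1]) (rule E1)
  moreover have "((\<lambda>n::nat. if n = 1 then 1 else 0 :: complex) has_sum 1) {0<..}"
  proof -
    have "((\<lambda>n::nat. if n = 1 then 1 else 0 :: complex) has_sum 1) {1}" using has_sum_finite[of "{1::nat}" "\<lambda>n::nat. if n = 1 then 1 else 0 :: complex"] by simp
    moreover have "((\<lambda>n::nat. if n = 1 then 1 else 0 :: complex) has_sum 1) {1} = ((\<lambda>n::nat. if n = 1 then 1 else 0 :: complex) has_sum 1) {0<..}"
      by (rule has_sum_cong_neutral) auto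
    ultimately show ?thesis by simp
  qed
  ultimately have Mz: "Msum * riemann_zeta s = 1" by (rule has_sum_unique)
  have P2: "((\<lambda>n. \<Sum>d\<in>{d. d dvd n}. Mw d * Fw (n div d)) has_sum (Msum * Fsum)) {0<..}"
    by (rule dir_prod[OF hM hF])
  have E2: "(\<Sum>d\<in>{d. d dvd n}. Mw d * Fw (n div d)) = c n / of_nat n powr s" if "n \<in> {0<..}" for n
  proof -
    have "(\<Sum>d\<in>{d. d dvd n}. Mw d * Fw (n div d)) = (\<Sum>d\<in>{d. d dvd n}. of_int (mu d) * F (n div d)) / of_nat n powr s"
      unfolding Mw_def Fw_def using conv_weight[of n "\<lambda>d. of_int (mu d)" s F] that by simp
    also have "(\<Sum>d\<in>{d. d dvd n}. of_int (mu d) * F (n div d)) = c n"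
      by (rule moebius_inversion[symmetric]) (use that ram_sum[OF b] in \<open>auto simp: c_def F_def\<close>)
    finally show ?thesis .
  qed
  have hC: "((\<lambda>n. c n / of_nat n powr s) has_sum (Msum * Fsum)) {0<..}"
    by (rule has_sum_cong[THEN iffD1, OF _ P2]) (rule E2)
  have P3: "((\<lambda>n. \<Sum>d\<in>{d. d dvd n}. (c d / of_nat d powr s) * Lw (n div d)) has_sum (Msum * Fsum * Lsum)) {0<..}"
    by (rule dir_prod[OF hC hL])
  have E3: "(\<Sum>d\<in>{d. d dvd n}. (c d / of_nat d powr s) * Lw (n div d)) = gen_mangoldt \<beta> k m n / of_nat n powr s"
    if "n \<in> {0<..}" for n
    unfolding Lw_def gen_mangoldt_def c_def
    using conv_weight[of n "\<lambda>d. gen_ramanujan \<beta> d m" s "\<lambda>j. of_real (ln (real j)) ^ k"] that by simp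
  have hLam: "((\<lambda>n. gen_mangoldt \<beta> k m n / of_nat n powr s) has_sum (Msum * Fsum * Lsum)) {0<..}"
    by (rule has_sum_cong[THEN iffD1, OF _ P3]) (rule E3)
  have val: "Msum * Fsum * Lsum = (-1) ^ k * gen_sigma \<beta> (1 - s / of_nat \<beta>) m
           * (deriv ^^ k) riemann_zeta s / riemann_zeta s"
  proof -
    have z: "riemann_zeta s \<noteq> 0" using Mz by auto
    have Mi: "Msum = 1 / riemann_zeta s" using Mz z by (simp add: eq_divide_eq)
    have "Msum * Fsum * Lsum = Fsum * ((-1) ^ k * Zs k s) / riemann_zeta s" using Mi Lsum_eq by simp
    also have "\<dots> = (-1) ^ k * Fsum * Zs k s / riemann_zeta s" by (simp add: mult_ac)
    finally show ?thesis using Fsum_eq higher_deriv_zeta[OF s, of k] by simp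
  qed
  show ?thesis using hs_unshift[OF hLam] val by simp
qed


end
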